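(* Let $\alpha\in(0,0.4701)$ and let $c^{(\alpha)}_{i,k}$ be the L1-2 coefficients defined in the context. Then, for sufficiently small temporal stepsize $\tau$, $$\frac{1}{c^{(\alpha)}_{1,k}}<C^{(\alpha)}(k\tau)^{\alpha},\qquad k\ge1,$$ where $C^{(\alpha)}=\max\Big\{\frac{6\Gamma(1-\alpha)}{\tilde a^{\alpha}},\frac{3\Gamma(2-\alpha)}{\alpha\,\tilde a^{\alpha}}\Big\}$.
   Context: Let $\tilde a>0$, $T>\tilde a$, $N\in\mathbb{Z}^+$, $\tau=(T-\tilde a)/N$, $t_k=\tilde a+k\tau$ ($k=0,\dots,N$). Define $a^{(\alpha)}_{i,k}=\big(\log\frac{t_k}{t_{i-1}}\big)^{1-\alpha}-\big(\log\frac{t_k}{t_i}\big)^{1-\alpha}$ and, for $i\ge2$, $$b^{(\alpha)}_{i,k}=\frac{1}{\log\frac{t_i}{t_{i-2}}}\Big\{\log\tfrac{t_i}{t_{i-1}}\Big[\Big(\log\tfrac{t_k}{t_i}\Big)^{1-\alpha}+\Big(\log\tfrac{t_k}{t_{i-1}}\Big)^{1-\alpha}\Big]+\tfrac{2}{2-\alpha}\Big[\Big(\log\tfrac{t_k}{t_i}\Big)^{2-\alpha}-\Big(\log\tfrac{t_k}{t_{i-1}}\Big)^{2-\alpha}\Big]\Big\}.$$ The coefficients are: $c^{(\alpha)}_{1,1}=\frac{a^{(\alpha)}_{1,1}}{\Gamma(2-\alpha)\log\frac{t_1}{t_0}}$; for $k=2$: $c^{(\alpha)}_{1,2}=\frac{a^{(\alpha)}_{1,2}+b^{(\alpha)}_{2,2}}{\Gamma(2-\alpha)\log\frac{t_1}{t_0}}$,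 $c^{(\alpha)}_{2,2}=\frac{a^{(\alpha)}_{2,2}-b^{(\alpha)}_{2,2}}{\Gamma(2-\alpha)\log\frac{t_2}{t_1}}$; for $k\ge3$: $c^{(\alpha)}_{1,k}=\frac{a^{(\alpha)}_{1,k}+b^{(\alpha)}_{2,k}}{\Gamma(2-\alpha)\log\frac{t_1}{t_0}}$, $c^{(\alpha)}_{i,k}=\frac{a^{(\alpha)}_{i,k}-b^{(\alpha)}_{i,k}+b^{(\alpha)}_{i+1,k}}{\Gamma(2-\alpha)\log\frac{t_i}{t_{i-1}}}$ for $2\le i\le k-1$, and $c^{(\alpha)}_{k,k}=\frac{a^{(\alpha)}_{k,k}-b^{(\alpha)}_{k,k}}{\Gamma(2-\alpha)\log\frac{t_k}{t_{k-1}}}$. *)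

theory Defs
  imports "HOL-Analysis.Analysis"
begin

definition grid :: "real \<Rightarrow> real \<Rightarrow> nat \<Rightarrow> nat \<Rightarrow> real" where
  "grid a T N k = a + real k * ((T - a) / real N)"

definition a_coef :: "real \<Rightarrow> (nat \<Rightarrow> real) \<Rightarrow> nat \<Rightarrow> nat \<Rightarrow> real" where
  "a_coef \<alpha> t i k = ln (t k / t (i - 1)) powr (1 - \<alpha>) - ln (t k / t i) powr (1 - \<alpha>)"

definition b_coef :: "real \<Rightarrow> (nat \<Rightarrow> real) \<Rightarrow> nat \<Rightarrow> nat \<Rightarrow> real" where
  "b_coef \<alpha> t i k = (1 / ln (t i / t (i - 2))) *
     (ln (t i / t (i - 1)) * (ln (t k / t i) powr (1 - \<alpha>) + ln (t k / t (i - 1)) powr (1 - \<alpha>))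
      + 2 / (2 - \<alpha>) * (ln (t k / t i) powr (2 - \<alpha>) - ln (t k / t (i - 1)) powr (2 - \<alpha>)))"

text \<open>L1-2 coefficients c_{i,k} (meaningful for 1 <= i <= k).\<close>
definition c_coef :: "real \<Rightarrow> (nat \<Rightarrow> real) \<Rightarrow> nat \<Rightarrow> nat \<Rightarrow> real" where
  "c_coef \<alpha> t i k =
    (if k = 1 then a_coef \<alpha> t 1 1 / (Gamma (2 - \<alpha>) * ln (t 1 / t 0))
     else if i = 1 then (a_coef \<alpha> t 1 k + b_coef \<alpha> t 2 k) / (Gamma (2 - \<alpha>) * ln (t 1 / t 0))
     else if i = k then (a_coef \<alpha> t k k - b_coef \<alpha> t k k) / (Gamma (2 - \<alpha>) * ln (t k / t (k - 1)))
     else (a_coef \<alpha> t i k - b_coef \<alpha> t i k + b_coef \<alpha> t (i + 1) k) / (Gamma (2 - \<alpha>) * ln (t i / t (i - 1))))"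

definition C_const :: "real \<Rightarrow> real \<Rightarrow> real" where
  "C_const \<alpha> a = max (6 * Gamma (1 - \<alpha>) / a powr \<alpha>) (3 * Gamma (2 - \<alpha>) / (\<alpha> * a powr \<alpha>))"

end

theory Submission
  imports Defs
begin

lemma tanA:
  fixes x y p :: real
  assumes "0 < y" "y \<le> x" "0 \<le> p" "p \<le> 1"
  shows "p * x powr (p - 1) * (x - y) \<le> x powr p - y powr p"
proof -
  define f where "f s = x powr p - s powr p - p * x powr (p - 1) * (x - s)" for s
  have "f y \<ge> f x"
  proof (rule DERIV_nonpos_imp_nonincreasing[OF assms(2)])
    fix s assume s: "y \<le> s" "s \<le> x"
    have d: "DERIV f s :> (- (p * s powr (p - 1)) + p * x powr (p - 1))"
      unfolding f_def using s assms
      by (auto intro!: derivative_eq_intros)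
    have "x powr (p - 1) \<le> s powr (p - 1)"
      using powr_mono2'[of "p - 1" s x] s assms by auto
    then have "p * x powr (p - 1) \<le> p * s powr (p - 1)"
      using assms by (simp add: mult_left_mono)
    with d show "\<exists>d. DERIV f s :> d \<and> d \<le> 0" by (intro exI[of _ "- (p * s powr (p - 1)) + p * x powr (p - 1)"]) auto
  qed
  then show ?thesis unfolding f_def by simp
qed

lemma tanB:
  fixes z y p :: real
  assumes "0 < z" "z \<le> y" "0 \<le> p" "p \<le> 1"
  shows "y powr p - z powr p \<le> p * z powr (p - 1) * (y - z)"
proof -
  define f where "f s = p * z powr (p - 1) * (s - z) - s powr p + z powr p" for s
  have "f z \<le> f y"
  proof (rule DERIV_nonneg_imp_nondecreasing[OF assms(2)])
    fix s assume s: "z \<le> s" "s \<le> y"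
    have d: "DERIV f s :> (p * z powr (p - 1) - p * s powr (p - 1))"
      unfolding f_def using s assms
      by (auto intro!: derivative_eq_intros)
    have "s powr (p - 1) \<le> z powr (p - 1)"
      using powr_mono2'[of "p - 1" z s] s assms by auto
    then have "p * s powr (p - 1) \<le> p * z powr (p - 1)"
      using assms by (simp add: mult_left_mono)
    with d show "\<exists>d. DERIV f s :> d \<and> d \<ge> 0" by (intro exI[of _ "p * z powr (p - 1) - p * s powr (p - 1)"]) auto
  qed
  then show ?thesis unfolding f_def by simp
qed

lemma tanC:
  fixes z y p :: real
  assumes "0 < z" "z \<le> y" "p \<le> 0"
  shows "z powr p + p * z powr (p - 1) * (y - z) \<le> y powr p"
proof -
  define f where "f s = s powr p - z powr p - p * z powr (p - 1) * (s - z)" for s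
  have "f z \<le> f y"
  proof (rule DERIV_nonneg_imp_nondecreasing[OF assms(2)])
    fix s assume s: "z \<le> s" "s \<le> y"
    have d: "DERIV f s :> (p * s powr (p - 1) - p * z powr (p - 1))"
      unfolding f_def using s assms
      by (auto intro!: derivative_eq_intros)
    have "s powr (p - 1) \<le> z powr (p - 1)"
      using powr_mono2'[of "p - 1" z s] s assms by auto
    then have "p * z powr (p - 1) \<le> p * s powr (p - 1)"
      using assms by (simp add: mult_left_mono_neg)
    with d show "\<exists>d. DERIV f s :> d \<and> d \<ge> 0" by (intro exI[of _ "p * s powr (p - 1) - p * z powr (p - 1)"]) auto
  qed
  then show ?thesis unfolding f_def by simp
qed

lemma Ebound:
  fixes z y \<alpha> :: real
  assumes "0 < z" "z \<le> y" "0 < \<alpha>" "\<alpha> < 1"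
  shows "y powr (2-\<alpha>)/(2-\<alpha>) - z powr (2-\<alpha>)/(2-\<alpha>) - (y-z)*(y powr (1-\<alpha>) + z powr (1-\<alpha>))/2
         \<le> (1-\<alpha>)*\<alpha>*z powr (-1-\<alpha>)*(y-z)^3/6"
proof -
  define K where "K = (1-\<alpha>)*\<alpha>*z powr (-1-\<alpha>)"
  define f where "f s = K*(s-z)^3/6 - (s powr (2-\<alpha>)/(2-\<alpha>) - z powr (2-\<alpha>)/(2-\<alpha>) - (s-z)*(s powr (1-\<alpha>) + z powr (1-\<alpha>))/2)" for s
  have "f z \<le> f y"
  proof (rule DERIV_nonneg_imp_nondecreasing[OF assms(2)])
    fix s assume s: "z \<le> s" "s \<le> y"
    have d: "(f has_real_derivative (K*(s-z)^2/2 - ((s powr (1-\<alpha>) - z powr (1-\<alpha>))/2 - (s-z)*(1-\<alpha>)* s powr (-\<alpha>)/2))) (at s)"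
      unfolding f_def using s assms
      by (auto intro!: derivative_eq_intros) (simp add: field_simps)
    have b1: "s powr (1-\<alpha>) - z powr (1-\<alpha>) \<le> (1-\<alpha>) * z powr (-\<alpha>) * (s - z)"
      using tanB[of z s "1-\<alpha>"] s assms by simp
    have b2: "z powr (-\<alpha>) - s powr (-\<alpha>) \<le> \<alpha> * z powr (-1-\<alpha>) * (s - z)"
    proof -
      have e: "-\<alpha> - 1 = -1 - \<alpha>" by simp
      have "z powr (-\<alpha>) + (-\<alpha>) * z powr (-1-\<alpha>) * (s-z) \<le> s powr (-\<alpha>)"
        using tanC[of z s "-\<alpha>"] s assms by (simp only: e)
      then show ?thesis by (simp add: algebra_simps)
    qed
    define M where "M = (1-\<alpha>)*(s-z) * (z powr (-\<alpha>) - s powr (-\<alpha>))"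
    define N where "N = (1-\<alpha>)*(s-z) * (\<alpha> * z powr (-1-\<alpha>) * (s - z))"
    define U where "U = (1-\<alpha>) * z powr (-\<alpha>) * (s - z)"
    define V where "V = (s-z)*(1-\<alpha>) * s powr (-\<alpha>)"
    define W where "W = K*(s-z)^2"
    define P where "P = s powr (1-\<alpha>) - z powr (1-\<alpha>)"
    have h1: "M \<le> N" unfolding M_def N_def
      using b2 s assms by (intro mult_left_mono) auto
    have h2: "U - V = M" unfolding U_def V_def M_def by (simp add: algebra_simps)
    have h3: "N = W" unfolding N_def W_def K_def by (simp add: power2_eq_square)
    have h4: "P \<le> U" using b1 unfolding P_def U_def .
    have "0 \<le> W - (P - V)" using h1 h2 h3 h4 by linarith
    then have "0 \<le> W/2 - (P/2 - V/2)" by simp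
    then have "0 \<le> K*(s-z)^2/2 - ((s powr (1-\<alpha>) - z powr (1-\<alpha>))/2 - (s-z)*(1-\<alpha>) * s powr (-\<alpha>)/2)"
      unfolding W_def P_def V_def by simp
    with d show "\<exists>d. DERIV f s :> d \<and> d \<ge> 0" by blast
  qed
  then show ?thesis unfolding f_def K_def by simp
qed

lemma Beq_gen:
  fixes H c h Z1 Y1 Z2 Y2 :: real
  assumes "H \<noteq> 0" "c \<noteq> 0"
  shows "(1/H)*(h*(Z1+Y1) + 2/c*(Z2 - Y2)) = -(2*(Y2/c - Z2/c - h*(Y1+Z1)/2)/H)"
  using assms by (simp add: field_simps)

lemma key:
  fixes x y z h1 h2 \<alpha> :: real
  assumes al: "0 < \<alpha>" "\<alpha> < 0.4701"
    and z0: "0 \<le> z" and yz: "y = z + h2" and xy: "x = y + h1" and h2: "0 < h2" "h2 \<le> h1"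
    and cases: "z = 0 \<or> (h1 \<le> 2*h2 \<and> h2 \<le> 2*z)"
  shows "(1-\<alpha>)/6 * x powr (-\<alpha>) * h1 \<le> (x powr (1-\<alpha>) - y powr (1-\<alpha>))
          + (1 / (h1 + h2)) * (h2 * (z powr (1-\<alpha>) + y powr (1-\<alpha>)) + 2/(2-\<alpha>) * (z powr (2-\<alpha>) - y powr (2-\<alpha>)))"
proof -
  have ypos: "0 < y" using yz z0 h2 by simp
  have xpos: "0 < x" using xy ypos h2 by simp
  define R where "R = (1-\<alpha>) * x powr (-\<alpha>) * h1"
  have Rpos: "0 \<le> R" unfolding R_def using al h2 by simp
  have A: "R \<le> x powr (1-\<alpha>) - y powr (1-\<alpha>)"
    using tanA[of y x "1-\<alpha>"] ypos xy h2 al unfolding R_def by simp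
  define E where "E = y powr (2-\<alpha>)/(2-\<alpha>) - z powr (2-\<alpha>)/(2-\<alpha>) - h2*(y powr (1-\<alpha>) + z powr (1-\<alpha>))/2"
  have Beq: "(1 / (h1 + h2)) * (h2 * (z powr (1-\<alpha>) + y powr (1-\<alpha>)) + 2/(2-\<alpha>) * (z powr (2-\<alpha>) - y powr (2-\<alpha>)))
      = - (2 * E / (h1 + h2))"
  proof -
    have "h1 + h2 \<noteq> 0" "2 - \<alpha> \<noteq> 0" using h2 al by auto
    then show ?thesis unfolding E_def by (rule Beq_gen)
  qed
  have mB: "2 * E / (h1 + h2) \<le> 5/6 * R"
  proof (cases "z = 0")
    case True
    have yh: "y = h2" using yz True by simp
    have p2: "h2 powr (2-\<alpha>) = h2 * h2 powr (1-\<alpha>)"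
    proof -
      have e: "2-\<alpha> = 1 + (1-\<alpha>)" by simp
      have "h2 powr (2-\<alpha>) = h2 powr 1 * h2 powr (1-\<alpha>)" unfolding e by (rule powr_add)
      then show ?thesis using h2 by simp
    qed
    have Eeq: "E = h2 * h2 powr (1-\<alpha>) * (\<alpha> / (2*(2-\<alpha>)))"
      unfolding E_def using True yh p2 al by (simp add: field_simps)
    have "2 * E / (h1 + h2) = (2*h2/(h1+h2)) * (h2 powr (1-\<alpha>) * (\<alpha> / (2*(2-\<alpha>))))"
      unfolding Eeq by (simp add: ac_simps)
    also have "\<dots> \<le> 1 * (h1 powr (1-\<alpha>) * (\<alpha> / (2*(2-\<alpha>))))"
    proof (rule mult_mono)
      show "2*h2/(h1+h2) \<le> 1" using h2 by simp
      show "h2 powr (1-\<alpha>) * (\<alpha> / (2*(2-\<alpha>))) \<le> h1 powr (1-\<alpha>) * (\<alpha> / (2*(2-\<alpha>)))"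
        using h2 al by (intro mult_right_mono powr_mono2) auto
    qed (use h2 al in auto)
    also have "\<dots> \<le> 5/6 * R"
    proof -
      have x2: "x \<le> 2 * h1" using xy yh h2 by simp
      have "(2*h1) powr (-\<alpha>) \<le> x powr (-\<alpha>)"
        using powr_mono2'[of "-\<alpha>" x "2*h1"] x2 xpos al by simp
      moreover have "(2*h1) powr (-\<alpha>) = 2 powr (-\<alpha>) * h1 powr (-\<alpha>)"
        using h2 by (simp add: powr_mult)
      moreover have "2 powr (-\<alpha>) \<ge> 1/2"
      proof -
        have "2 powr \<alpha> \<le> 2 powr 1" using al by (intro powr_mono) auto
        then show ?thesis by (simp add: powr_minus field_simps)
      qed
      moreover have "(1/2) * h1 powr (-\<alpha>) \<le> 2 powr (-\<alpha>) * h1 powr (-\<alpha>)"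
        using calculation(3) by (rule mult_right_mono) simp
      ultimately have xa: "h1 powr (-\<alpha>) / 2 \<le> x powr (-\<alpha>)"
        by linarith
      have hh: "h1 powr (-\<alpha>) * h1 = h1 powr (1-\<alpha>)"
      proof -
        have e: "1-\<alpha> = -\<alpha> + 1" by simp
        have "h1 powr (1-\<alpha>) = h1 powr (-\<alpha>) * h1 powr 1" unfolding e by (rule powr_add)
        then show ?thesis using h2 by simp
      qed
      have "R \<ge> (1-\<alpha>) * (h1 powr (-\<alpha>) / 2) * h1"
        unfolding R_def using xa al h2 by (intro mult_right_mono mult_left_mono) auto
      then have R2: "R \<ge> (1-\<alpha>)/2 * h1 powr (1-\<alpha>)"
        using hh by (simp add: algebra_simps)
      have c: "\<alpha> / (2*(2-\<alpha>)) \<le> 5/6 * ((1-\<alpha>)/2)"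
      proof -
        have "\<alpha> / (2*(2-\<alpha>)) \<le> \<alpha> / 3" using al by (intro divide_left_mono) auto
        moreover have "\<alpha> / 3 \<le> 5/6 * ((1-\<alpha>)/2)" using al by simp
        ultimately show ?thesis by linarith
      qed
      have "1 * (h1 powr (1-\<alpha>) * (\<alpha> / (2*(2-\<alpha>)))) \<le> h1 powr (1-\<alpha>) * (5/6 * ((1-\<alpha>)/2))"
        using mult_left_mono[OF c, of "h1 powr (1-\<alpha>)"] by simp
      also have "\<dots> \<le> 5/6 * R" using R2 by (simp add: algebra_simps)
      finally show ?thesis .
    qed
    finally show ?thesis .
  next
    case False
    then have zp: "0 < z" and hc: "h1 \<le> 2*h2" "h2 \<le> 2*z" using z0 cases by auto
    have Eb: "E \<le> (1-\<alpha>)*\<alpha>*z powr (-1-\<alpha>)*h2^3/6"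
      using Ebound[of z y \<alpha>] zp yz h2 al unfolding E_def by simp
    define Q where "Q = (1-\<alpha>)*\<alpha>*z powr (-1-\<alpha>)*h2^3/6"
    have Qpos: "0 \<le> Q" unfolding Q_def using al h2 by simp
    have "2 * E / (h1 + h2) \<le> 2 * Q / (h1 + h2)"
      using Eb h2 unfolding Q_def[symmetric] by (intro divide_right_mono) auto
    also have "\<dots> \<le> Q / h2"
    proof -
      have "Q / ((h1 + h2)/2) \<le> Q / h2"
        using Qpos h2 by (intro divide_left_mono) auto
      then show ?thesis by (simp add: mult.commute)
    qed
    also have "\<dots> = (1-\<alpha>)*\<alpha>*(z powr (-\<alpha>) / z)*h2^2/6"
    proof -
      have "z powr (-1-\<alpha>) = z powr (-\<alpha>) / z"
      proof -
        have e: "-1-\<alpha> = -\<alpha> + (-1)" by simp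
        have "z powr (-1-\<alpha>) = z powr (-\<alpha>) * z powr (-1)" unfolding e by (rule powr_add)
        then show ?thesis using zp by (simp add: powr_minus divide_inverse)
      qed
      then show ?thesis unfolding Q_def using h2 by (simp add: power2_eq_square power3_eq_cube)
    qed
    also have "\<dots> \<le> (1-\<alpha>)*\<alpha>*z powr (-\<alpha>) * (2 * h1) / 6"
    proof -
      have "h2^2 / z \<le> 2 * h1"
      proof -
        have "h2 * h2 \<le> (2*z) * h1" using hc h2 zp by (intro mult_mono) auto
        then show ?thesis using zp by (simp add: power2_eq_square field_simps)
      qed
      then have "(1-\<alpha>)*\<alpha>*z powr (-\<alpha>) * (h2^2 / z) \<le> (1-\<alpha>)*\<alpha>*z powr (-\<alpha>) * (2 * h1)"
        using al by (intro mult_left_mono) auto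
      then have "(1-\<alpha>)*\<alpha>*z powr (-\<alpha>) * (h2^2 / z) / 6 \<le> (1-\<alpha>)*\<alpha>*z powr (-\<alpha>) * (2 * h1) / 6"
        by (rule divide_right_mono) simp
      moreover have "(1-\<alpha>)*\<alpha>*(z powr (-\<alpha>) / z)*h2^2/6 = (1-\<alpha>)*\<alpha>*z powr (-\<alpha>) * (h2^2 / z) / 6"
        by simp
      ultimately show ?thesis by simp
    qed
    also have "\<dots> \<le> 5/6 * R"
    proof -
      have x7: "x \<le> 7 * z" using xy yz hc by simp
      have "(7*z) powr (-\<alpha>) \<le> x powr (-\<alpha>)"
        using powr_mono2'[of "-\<alpha>" x "7*z"] x7 xpos al by simp
      moreover have "(7*z) powr (-\<alpha>) = 7 powr (-\<alpha>) * z powr (-\<alpha>)"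
        using zp by (simp add: powr_mult)
      moreover have "7 powr (-\<alpha>) \<ge> 1/3"
      proof -
        have "7 powr \<alpha> \<le> 7 powr (1/2)" using al by (intro powr_mono) auto
        also have "7 powr (1/2) = sqrt 7" by (simp add: powr_half_sqrt)
        also have "sqrt 7 \<le> 3" by (rule real_le_lsqrt) auto
        finally show ?thesis by (simp add: powr_minus field_simps)
      qed
      moreover have "(1/3) * z powr (-\<alpha>) \<le> 7 powr (-\<alpha>) * z powr (-\<alpha>)"
        using calculation(3) by (rule mult_right_mono) simp
      ultimately have xa: "z powr (-\<alpha>) / 3 \<le> x powr (-\<alpha>)"
        by linarith
      have "R \<ge> (1-\<alpha>) * (z powr (-\<alpha>) / 3) * h1"
        unfolding R_def using xa al h2 by (intro mult_right_mono mult_left_mono) auto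
      moreover have "(1-\<alpha>)*\<alpha>*z powr (-\<alpha>) * (2 * h1) / 6 \<le> 5/6 * ((1-\<alpha>) * (z powr (-\<alpha>) / 3) * h1)"
      proof -
        have "0 \<le> (1-\<alpha>) * z powr (-\<alpha>) * h1" using al h2 by simp
        then have "(1-\<alpha>) * z powr (-\<alpha>) * h1 * (2*\<alpha>/6) \<le> (1-\<alpha>) * z powr (-\<alpha>) * h1 * (5/18)"
          using al by (intro mult_left_mono) auto
        then show ?thesis by (simp add: field_simps)
      qed
      ultimately show ?thesis by linarith
    qed
    finally show ?thesis .
  qed
  have "(1-\<alpha>)/6 * x powr (-\<alpha>) * h1 = R/6" unfolding R_def by simp
  then show ?thesis unfolding Beq using A mB by linarith
qed

lemma ln_step_bounds:
  fixes p \<tau> :: real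
  assumes "0 < p" "0 < \<tau>"
  shows "\<tau> / (p + \<tau>) \<le> ln ((p + \<tau>) / p)" "ln ((p + \<tau>) / p) \<le> \<tau> / p"
proof -
  have "ln (p / (p + \<tau>)) \<le> p / (p + \<tau>) - 1" using assms by (intro ln_le_minus_one) auto
  moreover have "ln (p / (p + \<tau>)) = - ln ((p + \<tau>) / p)" using assms by (simp add: ln_div)
  moreover have "p / (p + \<tau>) - 1 = - (\<tau> / (p + \<tau>))" using assms by (simp add: field_simps)
  ultimately show "\<tau> / (p + \<tau>) \<le> ln ((p + \<tau>) / p)" by linarith
  have "ln ((p + \<tau>) / p) \<le> (p + \<tau>) / p - 1" using assms by (intro ln_le_minus_one) auto
  also have "\<dots> = \<tau> / p" using assms by (simp add: field_simps)
  finally show "ln ((p + \<tau>) / p) \<le> \<tau> / p" .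
qed

lemma main_k1:
  fixes a \<tau> \<alpha> :: real
  assumes a: "0 < a" and tau: "0 < \<tau>" and al: "0 < \<alpha>" "\<alpha> < 1"
  defines "h \<equiv> ln ((a + \<tau>) / a)"
  shows "Gamma (2-\<alpha>) * h powr \<alpha> < C_const \<alpha> a * \<tau> powr \<alpha>"
proof -
  have hpos: "0 < h" unfolding h_def using a tau by simp
  have "h < \<tau> / a" unfolding h_def using ln_add_one_self_less_self[of "\<tau>/a"] a tau
    by (simp add: add_divide_distrib)
  then have "h powr \<alpha> < (\<tau> / a) powr \<alpha>" using hpos al by (intro powr_less_mono2) auto
  then have "h powr \<alpha> < \<tau> powr \<alpha> / a powr \<alpha>" by (simp add: powr_divide)
  then have "Gamma (2-\<alpha>) * h powr \<alpha> < Gamma (2-\<alpha>) * (\<tau> powr \<alpha> / a powr \<alpha>)"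
    using al by (intro mult_strict_left_mono) auto
  also have "\<dots> = (Gamma (2-\<alpha>) / a powr \<alpha>) * \<tau> powr \<alpha>" by simp
  also have "\<dots> \<le> C_const \<alpha> a * \<tau> powr \<alpha>"
  proof (rule mult_right_mono)
    have "Gamma (2-\<alpha>) / a powr \<alpha> \<le> 3 * Gamma (2 - \<alpha>) / (\<alpha> * a powr \<alpha>)"
    proof -
      have g: "0 < Gamma (2-\<alpha>)" using al by simp
      have "Gamma (2-\<alpha>) / a powr \<alpha> = 1 * (Gamma (2-\<alpha>) / a powr \<alpha>)" by simp
      also have "\<dots> \<le> (3/\<alpha>) * (Gamma (2-\<alpha>) / a powr \<alpha>)"
        using g a al by (intro mult_right_mono) (auto simp: field_simps)
      also have "\<dots> = 3 * Gamma (2 - \<alpha>) / (\<alpha> * a powr \<alpha>)" by simp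
      finally show ?thesis .
    qed
    then show "Gamma (2-\<alpha>) / a powr \<alpha> \<le> C_const \<alpha> a" unfolding C_const_def by linarith
  qed simp
  finally show ?thesis .
qed

lemma main_k2:
  fixes a \<tau> \<alpha> :: real and k :: nat and t :: "nat \<Rightarrow> real"
  assumes a: "0 < a" and tau: "0 < \<tau>" "\<tau> \<le> a/2" and al: "0 < \<alpha>" "\<alpha> < 0.4701" and k: "2 \<le> k"
    and t: "t = (\<lambda>j. a + real j * \<tau>)"
  shows "1 / ((a_coef \<alpha> t 1 k + b_coef \<alpha> t 2 k) / (Gamma (2-\<alpha>) * ln (t 1 / t 0)))
         < C_const \<alpha> a * (real k * \<tau>) powr \<alpha>"
proof -
  have tpos: "\<And>j. 0 < t j" unfolding t using a tau by (simp add: add_pos_nonneg)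
  have t0: "t 0 = a" unfolding t by simp
  have t1: "t 1 = a + \<tau>" unfolding t by simp
  have t2: "t 2 = (a + \<tau>) + \<tau>" unfolding t by simp
  have t3: "t 3 = (a + 2*\<tau>) + \<tau>" unfolding t by simp
  have tk: "t k = a + real k * \<tau>" unfolding t by simp
  define h1 where "h1 = ln (t 1 / t 0)"
  define h2 where "h2 = ln (t 2 / t 1)"
  define x where "x = ln (t k / t 0)"
  define y where "y = ln (t k / t 1)"
  define z where "z = ln (t k / t 2)"
  have lnd: "\<And>i j. ln (t i / t j) = ln (t i) - ln (t j)" using tpos by (simp add: ln_div less_imp_neq[symmetric])
  have yz: "y = z + h2" unfolding y_def z_def h2_def lnd by simp
  have xy: "x = y + h1" unfolding y_def x_def h1_def lnd by simp
  have h02: "ln (t 2 / t (2 - 2)) = h1 + h2" unfolding h1_def h2_def lnd by simp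
  have A: "a_coef \<alpha> t 1 k = x powr (1-\<alpha>) - y powr (1-\<alpha>)"
    unfolding a_coef_def x_def y_def by simp
  have B: "b_coef \<alpha> t 2 k = (1 / (h1 + h2)) * (h2 * (z powr (1-\<alpha>) + y powr (1-\<alpha>)) + 2/(2-\<alpha>) * (z powr (2-\<alpha>) - y powr (2-\<alpha>)))"
    unfolding b_coef_def h02 by (simp add: y_def z_def h2_def)
  have tmono: "\<And>i j. i \<le> j \<Longrightarrow> t i \<le> t j" unfolding t using tau by (simp add: mult_right_mono)
  have z0: "0 \<le> z" unfolding z_def using tpos tmono[OF k] by simp
  have h1b: "h1 \<le> \<tau> / a" unfolding h1_def t0 t1 using ln_step_bounds[OF a tau(1)] by simp
  have h2b: "\<tau> / ((a + \<tau>) + \<tau>) \<le> h2" "h2 \<le> \<tau> / (a + \<tau>)"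
    unfolding h2_def t1 t2 using ln_step_bounds[of "a+\<tau>" \<tau>] a tau by auto
  have h2pos: "0 < h2" using h2b(1) a tau by (smt (verit) divide_pos_pos)
  have h21: "h2 \<le> h1"
  proof -
    have "t 2 / t 1 \<le> t 1 / t 0" unfolding t0 t1 t2 using a tau
      by (simp add: divide_simps) (simp add: algebra_simps power2_eq_square)
    then show ?thesis unfolding h1_def h2_def using tpos by simp
  qed
  have cases: "z = 0 \<or> (h1 \<le> 2*h2 \<and> h2 \<le> 2*z)"
  proof (cases "k = 2")
    case True then show ?thesis unfolding z_def by simp
  next
    case False
    then have k3: "3 \<le> k" using k by simp
    have "\<tau> / a \<le> 2 * (\<tau> / ((a + \<tau>) + \<tau>))" using a tau by (simp add: field_simps)
    then have c1: "h1 \<le> 2*h2" using h1b h2b by linarith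
    define h3 where "h3 = ln (t 3 / t 2)"
    have h3b: "\<tau> / ((a + 2*\<tau>) + \<tau>) \<le> h3"
      unfolding h3_def t2 t3 using ln_step_bounds[of "a+2*\<tau>" \<tau>] a tau by (auto simp: algebra_simps)
    have "\<tau> / (a + \<tau>) \<le> 2 * (\<tau> / ((a + 2*\<tau>) + \<tau>))" using a tau by (simp add: field_simps)
    then have "h2 \<le> 2 * h3" using h2b h3b by linarith
    moreover have "h3 \<le> z" unfolding h3_def z_def using tpos tmono[OF k3] by (simp add: divide_right_mono less_imp_le)
    ultimately show ?thesis using c1 by simp
  qed
  have key': "(1-\<alpha>)/6 * x powr (-\<alpha>) * h1 \<le> a_coef \<alpha> t 1 k + b_coef \<alpha> t 2 k"
    unfolding A B using key[OF al z0 yz xy h2pos h21 cases] .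
  define S where "S = a_coef \<alpha> t 1 k + b_coef \<alpha> t 2 k"
  define L where "L = (1-\<alpha>)/6 * x powr (-\<alpha>) * h1"
  define GG where "GG = Gamma (2-\<alpha>)"
  define G1 where "G1 = Gamma (1-\<alpha>)"
  have h1pos: "0 < h1" using h2pos h21 by simp
  have xpos: "0 < x" using xy yz z0 h2pos h1pos by simp
  have Lpos: "0 < L" unfolding L_def using al h1pos xpos by simp
  have SL: "L \<le> S" unfolding L_def S_def using key' .
  have G1pos: "0 < G1" unfolding G1_def using al by simp
  have GGeq: "GG = (1-\<alpha>) * G1"
  proof -
    have "(1-\<alpha>) \<notin> \<int>\<^sub>\<le>\<^sub>0" using al nonpos_Ints_nonpos by fastforce
    then have "Gamma ((1-\<alpha>) + 1) = (1-\<alpha>) * Gamma (1-\<alpha>)" by (rule Gamma_plus1)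
    moreover have "(1-\<alpha>) + 1 = 2 - \<alpha>" by simp
    ultimately show ?thesis unfolding GG_def G1_def by simp
  qed
  have GGpos: "0 < GG" unfolding GGeq using al G1pos by simp
  have "1 / (S / (GG * h1)) = GG * h1 / S" by simp
  also have "\<dots> \<le> GG * h1 / L"
    using GGpos h1pos Lpos SL by (intro divide_left_mono) auto
  also have "GG * h1 / L = 6 * G1 * x powr \<alpha>"
    unfolding L_def GGeq using al h1pos xpos G1pos by (simp add: powr_minus field_simps)
  also have "\<dots> < 6 * G1 * ((real k * \<tau>) powr \<alpha> / a powr \<alpha>)"
  proof -
    have "x = ln (1 + real k * \<tau> / a)" unfolding x_def tk t0 using a by (simp add: add_divide_distrib)
    also have "\<dots> < real k * \<tau> / a" using k a tau by (intro ln_add_one_self_less_self) auto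
    finally have "x powr \<alpha> < (real k * \<tau> / a) powr \<alpha>" using xpos al by (intro powr_less_mono2) auto
    then have "x powr \<alpha> < (real k * \<tau>) powr \<alpha> / a powr \<alpha>" by (simp add: powr_divide)
    then show ?thesis using G1pos by (intro mult_strict_left_mono) auto
  qed
  also have "\<dots> = (6 * G1 / a powr \<alpha>) * (real k * \<tau>) powr \<alpha>" by simp
  also have "\<dots> \<le> C_const \<alpha> a * (real k * \<tau>) powr \<alpha>"
    unfolding C_const_def G1_def by (intro mult_right_mono) auto
  finally show ?thesis unfolding S_def GG_def h1_def .
qed

theorem lemma2p6:
  fixes a T \<alpha> :: real
  assumes "0 < a" and "a < T" and "0 < \<alpha>" and "\<alpha> < 0.4701"
  shows "\<exists>\<tau>0 > 0. \<forall>N::nat. N > 0 \<longrightarrow> (T - a) / real N < \<tau>0 \<longrightarrow>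
           (\<forall>k. 1 \<le> k \<and> k \<le> N \<longrightarrow>
              1 / c_coef \<alpha> (grid a T N) 1 k < C_const \<alpha> a * (real k * ((T - a) / real N)) powr \<alpha>)"
proof (intro exI[of _ "a/2"] conjI allI impI)
  show "0 < a/2" using assms by simp
  fix N :: nat and k :: nat
  assume N: "0 < N" and small: "(T - a) / real N < a / 2" and kk: "1 \<le> k \<and> k \<le> N"
  define \<tau> where "\<tau> = (T - a) / real N"
  have tau: "0 < \<tau>" "\<tau> \<le> a/2" unfolding \<tau>_def using N assms small by auto
  have t: "grid a T N = (\<lambda>j. a + real j * \<tau>)" unfolding grid_def \<tau>_def by (rule ext) simp
  show "1 / c_coef \<alpha> (grid a T N) 1 k < C_const \<alpha> a * (real k * ((T - a) / real N)) powr \<alpha>"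
  proof (cases "k = 1")
    case True
    define h where "h = ln ((a + \<tau>) / a)"
    have hpos: "0 < h" unfolding h_def using assms tau by simp
    have c: "c_coef \<alpha> (grid a T N) 1 k = h powr (1-\<alpha>) / (Gamma (2-\<alpha>) * h)"
      unfolding c_coef_def a_coef_def True t h_def by simp
    have "h powr (1-\<alpha>) = h powr (-\<alpha>) * h"
    proof -
      have e: "1-\<alpha> = -\<alpha> + 1" by simp
      have "h powr (1-\<alpha>) = h powr (-\<alpha>) * h powr 1" unfolding e by (rule powr_add)
      then show ?thesis using hpos by simp
    qed
    then have "1 / c_coef \<alpha> (grid a T N) 1 k = Gamma (2-\<alpha>) * h powr \<alpha>"
      unfolding c using hpos assms by (simp add: powr_minus field_simps)
    also have "\<dots> < C_const \<alpha> a * \<tau> powr \<alpha>"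
      unfolding h_def using assms tau by (intro main_k1) auto
    finally show ?thesis unfolding \<tau>_def True by simp
  next
    case False
    then have k2: "2 \<le> k" using kk by simp
    have c: "c_coef \<alpha> (grid a T N) 1 k = (a_coef \<alpha> (grid a T N) 1 k + b_coef \<alpha> (grid a T N) 2 k) / (Gamma (2-\<alpha>) * ln (grid a T N 1 / grid a T N 0))"
      unfolding c_coef_def using False by simp
    have "1 / c_coef \<alpha> (grid a T N) 1 k < C_const \<alpha> a * (real k * \<tau>) powr \<alpha>"
      unfolding c unfolding t using main_k2[OF assms(1) tau assms(3,4) k2 refl] by simp
    then show ?thesis unfolding \<tau>_def .
  qed
qed

end
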